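(* Let $A\in\mathbb{R}^{p\times n}$ satisfy $A\mathbf{1}=\mathbf{0}$ and let $K\ge 1$ be an integer. Put $\beta=-\min_{i,j}(A^TA)_{ij}$, $\tilde A=\begin{bmatrix}\sqrt{\beta}\,\mathbf{1}^T\\ A\end{bmatrix}$, $W=\tilde A^T\tilde A$ and $L=\operatorname{diag}(W\mathbf{1})-W$. Then the K-means problem $$\min_{D\in\mathbb{R}^{p\times K},\,X}\|A-DX\|_F^2\quad\text{s.t. }X\in\mathcal{H}$$ and the ratio-cut problem $$\min_{X}\operatorname{tr}\{XLX^T\}\quad\text{s.t. }X\in\mathcal{H}$$ have the same solutions $X$.
   Context: $\mathbf{1}$ is the all-ones vector and $\operatorname{diag}(v)$ the diagonal matrix with diagonal $v$. $\mathcal{F}$ is the set of indicator matrices $F\in\{0,1\}^{K\times n}$ in which every column has exactly one entry equal to $1$ (row $k$ indicates membership of the samples in cluster $C_k$, of size $n_k=F_kF_k^T$, assumed nonzero). $\mathcal{H}=\{(FF^T)^{-1/2}F: F\in\mathcal{F}\}$ is the set of normalized indicator matrices (row $k$ equals $F_k/\sqrt{n_k}$). *)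

theory Defs
  imports "HOL-Analysis.Analysis"
begin

text \<open>Matrices are rendered with type-indexed dimensions: a p x n real matrix is
  a value of type real^'n^'p (rows indexed by 'p, columns by 'n).\<close>

definition ones :: "real^'n" where
  "ones = (\<chi> j. 1)"

definition diag_mat :: "real^'n \<Rightarrow> real^'n^'n" where
  "diag_mat v = (\<chi> i j. if i = j then v $ i else 0)"

definition frob_sq :: "real^'n^'m \<Rightarrow> real" where
  "frob_sq M = (\<Sum>i\<in>UNIV. \<Sum>j\<in>UNIV. (M $ i $ j)^2)"

definition indicator_mats :: "(real^'n^'k) set" where
  "indicator_mats = {F. (\<forall>k j. F $ k $ j = 0 \<or> F $ k $ j = 1)
      \<and> (\<forall>j. \<exists>!k. F $ k $ j = 1)
      \<and> (\<forall>k. (\<Sum>j\<in>UNIV. F $ k $ j) \<noteq> 0)}"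

text \<open>Normalization (F F^T)^{-1/2} F: row k divided by sqrt n_k.\<close>
definition normalize_ind :: "real^'n^'k \<Rightarrow> real^'n^'k" where
  "normalize_ind F = (\<chi> k j. F $ k $ j / sqrt (\<Sum>l\<in>UNIV. F $ k $ l))"

definition normalized_ind_mats :: "(real^'n^'k) set" where
  "normalized_ind_mats = normalize_ind ` indicator_mats"

definition beta_of :: "real^'n^'p \<Rightarrow> real" where
  "beta_of A = - Min {(transpose A ** A) $ i $ j | i j. True}"

text \<open>Augmented matrix [sqrt beta 1^T; A], with an extra row indexed by Inl ().\<close>
definition A_tilde :: "real^'n^'p \<Rightarrow> real^'n^(unit + 'p)" where
  "A_tilde A = (\<chi> r. case r of Inl _ \<Rightarrow> sqrt (beta_of A) *\<^sub>R ones | Inr i \<Rightarrow> A $ i)"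

definition W_of :: "real^'n^'p \<Rightarrow> real^'n^'n" where
  "W_of A = transpose (A_tilde A) ** A_tilde A"

definition L_of :: "real^'n^'p \<Rightarrow> real^'n^'n" where
  "L_of A = diag_mat (W_of A *v ones) - W_of A"

definition kmeans_solution :: "real^'n^'p \<Rightarrow> real^'n^'k \<Rightarrow> bool" where
  "kmeans_solution A X \<longleftrightarrow> X \<in> normalized_ind_mats \<and>
     (\<exists>D :: real^'k^'p. \<forall>(D' :: real^'k^'p) X'. X' \<in> normalized_ind_mats \<longrightarrow>
        frob_sq (A - D ** X) \<le> frob_sq (A - D' ** X'))"

definition ratiocut_solution :: "real^'n^'n \<Rightarrow> real^'n^'k \<Rightarrow> bool" where
  "ratiocut_solution L X \<longleftrightarrow> X \<in> normalized_ind_mats \<and>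
     (\<forall>X' :: real^'n^'k. X' \<in> normalized_ind_mats \<longrightarrow> trace (X ** L ** transpose X) \<le> trace (X' ** L ** transpose X'))"

end

theory Submission imports Defs begin

lemma H_props:
  fixes X :: "real^'n^'k"
  assumes "X \<in> normalized_ind_mats"
  shows "\<forall>k k'. (\<Sum>j\<in>UNIV. X$k$j * X$k'$j) = (if k = k' then 1 else 0)"
    and "(\<Sum>k\<in>UNIV. (\<Sum>j\<in>UNIV. X$k$j)^2) = real CARD('n)"
proof -
  obtain F where F: "F \<in> indicator_mats" and XF: "X = normalize_ind F"
    using assms unfolding normalized_ind_mats_def by auto
  define N where "N k = (\<Sum>l\<in>UNIV. F$k$l)" for k
  have F01: "F$k$j = 0 \<or> F$k$j = 1" for k j using F unfolding indicator_mats_def by auto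
  have Fu: "\<exists>!k. F$k$j = 1" for j using F unfolding indicator_mats_def by auto
  have Nnz: "N k \<noteq> 0" for k using F unfolding indicator_mats_def N_def by auto
  have Nge: "N k \<ge> 0" for k unfolding N_def using F01 by (intro sum_nonneg) (metis order.refl zero_le_one)
  have Npos: "N k > 0" for k using Nnz Nge by (metis order_le_less)
  have Xe: "X$k$j = F$k$j / sqrt (N k)" for k j
    unfolding XF normalize_ind_def N_def by simp
  have prod0: "F$k$j * F$k'$j = 0" if "k \<noteq> k'" for k k' j
    using F01[of k j] F01[of k' j] Fu[of j] that by auto
  have sq: "F$k$j * F$k$j = F$k$j" for k j using F01[of k j] by auto
  show "\<forall>k k'. (\<Sum>j\<in>UNIV. X$k$j * X$k'$j) = (if k = k' then 1 else 0)"
  proof (intro allI)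
    fix k k'
    show "(\<Sum>j\<in>UNIV. X$k$j * X$k'$j) = (if k = k' then 1 else 0)"
    proof (cases "k = k'")
      case True
      have "(\<Sum>j\<in>UNIV. X$k$j * X$k'$j) = (\<Sum>j\<in>UNIV. F$k$j) / (sqrt (N k) * sqrt (N k))"
        unfolding Xe True by (simp add: sum_divide_distrib sq)
      also have "\<dots> = 1" using Npos[of k] unfolding N_def by simp
      finally show ?thesis using True by simp
    next
      case False
      have "(\<Sum>j\<in>UNIV. X$k$j * X$k'$j) = (\<Sum>j\<in>UNIV. (F$k$j * F$k'$j) / (sqrt (N k) * sqrt (N k')))"
        unfolding Xe by (simp add: field_simps)
      also have "\<dots> = 0" by (simp add: prod0[OF False])
      finally show ?thesis using False by simp
    qed
  qed
  have rs: "(\<Sum>j\<in>UNIV. X$k$j)^2 = N k" for k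
  proof -
    have "(\<Sum>j\<in>UNIV. X$k$j) = N k / sqrt (N k)" unfolding Xe N_def by (simp add: sum_divide_distrib)
    moreover have "(N k / sqrt (N k))^2 = N k"
    proof -
      have "(N k / sqrt (N k))^2 = (N k)^2 / (sqrt (N k))^2" by (rule power_divide)
      also have "\<dots> = (N k)^2 / N k" using Npos[of k] by (metis less_imp_le real_sqrt_pow2)
      also have "\<dots> = N k" using Npos[of k] by (metis power2_eq_square nonzero_mult_div_cancel_right less_irrefl)
      finally show ?thesis .
    qed
    ultimately show ?thesis by simp
  qed
  have cs: "(\<Sum>k\<in>UNIV. F$k$j) = 1" for j
  proof -
    obtain k0 where k0: "F$k0$j = 1" and u: "\<And>k. F$k$j = 1 \<Longrightarrow> k = k0" using Fu[of j] by auto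
    have "(\<Sum>k\<in>UNIV. F$k$j) = (\<Sum>k\<in>UNIV. if k = k0 then 1 else 0)"
    proof (rule sum.cong)
      fix k assume "k \<in> (UNIV::'k set)"
      show "F$k$j = (if k = k0 then 1 else 0)"
      proof (cases "k = k0")
        case True then show ?thesis using k0 by simp
      next
        case False then have "F$k$j \<noteq> 1" using u by blast
        then show ?thesis using F01[of k j] False by simp
      qed
    qed simp
    then show ?thesis by simp
  qed
  have "(\<Sum>k\<in>UNIV. (\<Sum>j\<in>UNIV. X$k$j)^2) = (\<Sum>k\<in>UNIV. N k)" by (simp only: rs)
  also have "\<dots> = (\<Sum>j\<in>UNIV. \<Sum>k\<in>UNIV. F$k$j)" unfolding N_def by (rule sum.swap)
  also have "\<dots> = real CARD('n)" using cs by simp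
  finally show "(\<Sum>k\<in>UNIV. (\<Sum>j\<in>UNIV. X$k$j)^2) = real CARD('n)" .
qed

lemma row_id:
  fixes X :: "real^'n^'k" and a :: "'n \<Rightarrow> real" and d :: "'k \<Rightarrow> real"
  assumes orth: "\<forall>k k'. (\<Sum>j\<in>UNIV. X$k$j * X$k'$j) = (if k = k' then 1 else 0)"
  shows "(\<Sum>j\<in>UNIV. (a j - (\<Sum>k\<in>UNIV. d k * X$k$j))^2)
     = (\<Sum>j\<in>UNIV. (a j)^2) - (\<Sum>k\<in>UNIV. (\<Sum>j\<in>UNIV. a j * X$k$j)^2)
       + (\<Sum>k\<in>UNIV. (d k - (\<Sum>j\<in>UNIV. a j * X$k$j))^2)"
proof -
  define s where "s j = (\<Sum>k\<in>UNIV. d k * X$k$j)" for j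
  define b where "b k = (\<Sum>j\<in>UNIV. a j * X$k$j)" for k
  have h1: "(\<Sum>j\<in>UNIV. a j * s j) = (\<Sum>k\<in>UNIV. d k * b k)"
    unfolding s_def b_def sum_distrib_left
    by (subst sum.swap) (simp add: ac_simps)
  have "(\<Sum>j\<in>UNIV. (s j)^2) = (\<Sum>j\<in>UNIV. \<Sum>k\<in>UNIV. \<Sum>k'\<in>UNIV. d k * d k' * (X$k$j * X$k'$j))"
    unfolding s_def power2_eq_square sum_product by (simp add: ac_simps)
  also have "\<dots> = (\<Sum>k\<in>UNIV. \<Sum>k'\<in>UNIV. \<Sum>j\<in>UNIV. d k * d k' * (X$k$j * X$k'$j))"
    by (subst sum.swap) (rule sum.cong[OF refl], rule sum.swap)
  also have "\<dots> = (\<Sum>k\<in>UNIV. \<Sum>k'\<in>UNIV. d k * d k' * (if k = k' then 1 else 0))"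
    by (simp add: sum_distrib_left[symmetric] orth)
  also have "\<dots> = (\<Sum>k\<in>UNIV. (d k)^2)"
    by (simp add: power2_eq_square if_distrib[of "\<lambda>x. _ * x"] cong: if_cong)
  finally have h2: "(\<Sum>j\<in>UNIV. (s j)^2) = (\<Sum>k\<in>UNIV. (d k)^2)" .
  have e1: "(\<Sum>j\<in>UNIV. (a j - s j)^2) = (\<Sum>j\<in>UNIV. (a j)^2) - 2 * (\<Sum>j\<in>UNIV. a j * s j) + (\<Sum>j\<in>UNIV. (s j)^2)"
    by (simp add: power2_diff sum.distrib sum_subtractf sum_distrib_left mult.assoc)
  have e2: "(\<Sum>k\<in>UNIV. (d k - b k)^2) = (\<Sum>k\<in>UNIV. (d k)^2) - 2 * (\<Sum>k\<in>UNIV. d k * b k) + (\<Sum>k\<in>UNIV. (b k)^2)"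
    by (simp add: power2_diff sum.distrib sum_subtractf sum_distrib_left mult.assoc)
  show ?thesis
    using e1 e2 h1 h2 unfolding s_def[symmetric] b_def[symmetric] by linarith
qed

definition hval :: "real^'n^'p \<Rightarrow> real^'n^'k \<Rightarrow> real" where
  "hval A X = (\<Sum>i\<in>UNIV. \<Sum>k\<in>UNIV. (\<Sum>j\<in>UNIV. A$i$j * X$k$j)^2)"

lemma frob_id:
  fixes X :: "real^'n^'k" and A :: "real^'n^'p" and D :: "real^'k^'p"
  assumes orth: "\<forall>k k'. (\<Sum>j\<in>UNIV. X$k$j * X$k'$j) = (if k = k' then 1 else 0)"
  shows "frob_sq (A - D ** X) = frob_sq A - hval A X
      + (\<Sum>i\<in>UNIV. \<Sum>k\<in>UNIV. (D$i$k - (\<Sum>j\<in>UNIV. A$i$j * X$k$j))^2)"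
proof -
  have "frob_sq (A - D ** X) = (\<Sum>i\<in>UNIV. \<Sum>j\<in>UNIV. (A$i$j - (\<Sum>k\<in>UNIV. D$i$k * X$k$j))^2)"
    unfolding frob_sq_def by (simp add: matrix_matrix_mult_def)
  also have "\<dots> = (\<Sum>i\<in>UNIV. (\<Sum>j\<in>UNIV. (A$i$j)^2) - (\<Sum>k\<in>UNIV. (\<Sum>j\<in>UNIV. A$i$j * X$k$j)^2)
       + (\<Sum>k\<in>UNIV. (D$i$k - (\<Sum>j\<in>UNIV. A$i$j * X$k$j))^2))"
    by (rule sum.cong[OF refl]) (rule row_id[OF orth])
  also have "\<dots> = frob_sq A - hval A X
      + (\<Sum>i\<in>UNIV. \<Sum>k\<in>UNIV. (D$i$k - (\<Sum>j\<in>UNIV. A$i$j * X$k$j))^2)"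
    unfolding frob_sq_def hval_def by (simp add: sum.distrib sum_subtractf)
  finally show ?thesis .
qed

lemma W_entry:
  fixes A :: "real^'n^'p"
  shows "W_of A $ l $ j = (sqrt (beta_of A))^2 + (\<Sum>p\<in>UNIV. A$p$l * A$p$j)"
proof -
  have "W_of A $ l $ j = (\<Sum>r\<in>(UNIV::unit set) <+> (UNIV::'p set). (A_tilde A)$r$l * (A_tilde A)$r$j)"
    unfolding W_of_def by (simp add: matrix_matrix_mult_def transpose_def)
  also have "\<dots> = (sqrt (beta_of A))^2 + (\<Sum>p\<in>UNIV. A$p$l * A$p$j)"
    by (subst sum.Plus) (simp_all add: A_tilde_def ones_def power2_eq_square)
  finally show ?thesis .
qed

lemma L_entry:
  fixes A :: "real^'n^'p"
  assumes A1: "A *v ones = 0"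
  shows "L_of A $ l $ j = (if l = j then real CARD('n) * (sqrt (beta_of A))^2 else 0)
       - (sqrt (beta_of A))^2 - (\<Sum>p\<in>UNIV. A$p$l * A$p$j)"
proof -
  have rz: "(\<Sum>j\<in>UNIV. A$p$j) = 0" for p
  proof -
    have "(A *v ones) $ p = 0" using A1 by simp
    then show ?thesis by (simp add: matrix_vector_mult_def ones_def)
  qed
  have "(W_of A *v ones) $ l = (\<Sum>j\<in>UNIV. (sqrt (beta_of A))^2 + (\<Sum>p\<in>UNIV. A$p$l * A$p$j))"
    by (simp add: matrix_vector_mult_def ones_def W_entry)
  also have "\<dots> = real CARD('n) * (sqrt (beta_of A))^2 + (\<Sum>p\<in>UNIV. A$p$l * (\<Sum>j\<in>UNIV. A$p$j))"
    by (simp add: sum.distrib sum_distrib_left) (rule sum.swap)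
  also have "\<dots> = real CARD('n) * (sqrt (beta_of A))^2" by (simp add: rz)
  finally have wl: "(W_of A *v ones) $ l = real CARD('n) * (sqrt (beta_of A))^2" .
  then show ?thesis
    unfolding L_of_def diag_mat_def by (cases "l = j") (simp_all add: W_entry wl)
qed

lemma trace_id:
  fixes A :: "real^'n^'p" and X :: "real^'n^'k"
  assumes A1: "A *v ones = 0" and XH: "X \<in> normalized_ind_mats"
  shows "trace (X ** L_of A ** transpose X) =
     real CARD('n) * (sqrt (beta_of A))^2 * real CARD('k) - (sqrt (beta_of A))^2 * real CARD('n) - hval A X"
proof -
  define c where "c = (sqrt (beta_of A))^2"
  define n where "n = real CARD('n)"
  note orth = H_props(1)[OF XH]
  note rs = H_props(2)[OF XH]
  have Le: "L_of A $ l $ j = (if l = j then n * c else 0) - c - (\<Sum>p\<in>UNIV. A$p$l * A$p$j)" for l j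
    unfolding c_def n_def by (rule L_entry[OF A1])
  define Q where "Q k = (\<Sum>l\<in>UNIV. \<Sum>j\<in>UNIV. X$k$l * L_of A $ l $ j * X$k$j)" for k
  have tr: "trace (X ** L_of A ** transpose X) = (\<Sum>k\<in>UNIV. Q k)"
    unfolding trace_def Q_def
    by (simp add: matrix_matrix_mult_def transpose_def sum_distrib_right)
       (rule sum.cong[OF refl], rule sum.swap)
  have T1: "(\<Sum>l\<in>UNIV. \<Sum>j\<in>UNIV. X$k$l * (if l = j then n * c else 0) * X$k$j) = n * c" for k
  proof -
    have "(\<Sum>l\<in>UNIV. \<Sum>j\<in>UNIV. X$k$l * (if l = j then n * c else 0) * X$k$j)
        = (\<Sum>l\<in>UNIV. n * c * (X$k$l * X$k$l))"
      by (rule sum.cong[OF refl]) (simp add: if_distrib[of "\<lambda>x. _ * x"] if_distrib[of "\<lambda>x. x * _"] cong: if_cong)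
    also have "\<dots> = n * c" using orth by (simp add: sum_distrib_left[symmetric])
    finally show ?thesis .
  qed
  have T2: "(\<Sum>l\<in>UNIV. \<Sum>j\<in>UNIV. X$k$l * c * X$k$j) = c * (\<Sum>j\<in>UNIV. X$k$j)^2" for k
    by (simp add: power2_eq_square sum_product sum_distrib_left ac_simps)
  have T3: "(\<Sum>l\<in>UNIV. \<Sum>j\<in>UNIV. X$k$l * (\<Sum>p\<in>UNIV. A$p$l * A$p$j) * X$k$j)
       = (\<Sum>p\<in>UNIV. (\<Sum>j\<in>UNIV. A$p$j * X$k$j)^2)" for k
  proof -
    have "(\<Sum>l\<in>UNIV. \<Sum>j\<in>UNIV. X$k$l * (\<Sum>p\<in>UNIV. A$p$l * A$p$j) * X$k$j)
        = (\<Sum>l\<in>UNIV. \<Sum>j\<in>UNIV. \<Sum>p\<in>UNIV. (A$p$l * X$k$l) * (A$p$j * X$k$j))"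
      by (simp add: sum_distrib_left sum_distrib_right ac_simps)
    also have "\<dots> = (\<Sum>l\<in>UNIV. \<Sum>p\<in>UNIV. \<Sum>j\<in>UNIV. (A$p$l * X$k$l) * (A$p$j * X$k$j))"
      by (rule sum.cong[OF refl], rule sum.swap)
    also have "\<dots> = (\<Sum>p\<in>UNIV. \<Sum>l\<in>UNIV. \<Sum>j\<in>UNIV. (A$p$l * X$k$l) * (A$p$j * X$k$j))"
      by (rule sum.swap)
    also have "\<dots> = (\<Sum>p\<in>UNIV. (\<Sum>j\<in>UNIV. A$p$j * X$k$j)^2)"
      by (simp add: power2_eq_square sum_product)
    finally show ?thesis .
  qed
  have Qk: "Q k = n * c - c * (\<Sum>j\<in>UNIV. X$k$j)^2 - (\<Sum>p\<in>UNIV. (\<Sum>j\<in>UNIV. A$p$j * X$k$j)^2)" for k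
  proof -
    have "Q k = (\<Sum>l\<in>UNIV. \<Sum>j\<in>UNIV. X$k$l * (if l = j then n * c else 0) * X$k$j)
        - (\<Sum>l\<in>UNIV. \<Sum>j\<in>UNIV. X$k$l * c * X$k$j)
        - (\<Sum>l\<in>UNIV. \<Sum>j\<in>UNIV. X$k$l * (\<Sum>p\<in>UNIV. A$p$l * A$p$j) * X$k$j)"
      unfolding Q_def Le by (simp add: algebra_simps sum_subtractf sum.distrib)
    then show ?thesis using T1 T2 T3 by simp
  qed
  have "(\<Sum>k\<in>UNIV. Q k) = n * c * real CARD('k) - c * (\<Sum>k\<in>UNIV. (\<Sum>j\<in>UNIV. X$k$j)^2)
       - (\<Sum>k\<in>UNIV. \<Sum>p\<in>UNIV. (\<Sum>j\<in>UNIV. A$p$j * X$k$j)^2)"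
    by (simp add: Qk sum_subtractf sum_distrib_left)
  also have "(\<Sum>k\<in>UNIV. \<Sum>p\<in>UNIV. (\<Sum>j\<in>UNIV. A$p$j * X$k$j)^2) = hval A X"
    unfolding hval_def by (rule sum.swap)
  finally show ?thesis using tr rs unfolding c_def n_def by (simp add: ac_simps)
qed

lemma frob_ge:
  fixes X :: "real^'n^'k" and A :: "real^'n^'p" and D :: "real^'k^'p"
  assumes "X \<in> normalized_ind_mats"
  shows "frob_sq A - hval A X \<le> frob_sq (A - D ** X)"
  unfolding frob_id[OF H_props(1)[OF assms]]
  by (simp add: sum_nonneg)

lemma frob_eq:
  fixes X :: "real^'n^'k" and A :: "real^'n^'p"
  assumes "X \<in> normalized_ind_mats"
  shows "frob_sq (A - (A ** transpose X) ** X) = frob_sq A - hval A X"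
  unfolding frob_id[OF H_props(1)[OF assms]]
  by (simp add: matrix_matrix_mult_def transpose_def)

lemma kmeans_iff:
  fixes A :: "real^'n^'p" and X :: "real^'n^'k"
  shows "kmeans_solution A X \<longleftrightarrow> X \<in> normalized_ind_mats \<and>
     (\<forall>X' :: real^'n^'k. X' \<in> normalized_ind_mats \<longrightarrow> hval A X' \<le> hval A X)"
proof
  assume "kmeans_solution A X"
  then obtain D :: "real^'k^'p" where XH: "X \<in> normalized_ind_mats"
    and D: "\<And>(D' :: real^'k^'p) (X' :: real^'n^'k). X' \<in> normalized_ind_mats \<Longrightarrow> frob_sq (A - D ** X) \<le> frob_sq (A - D' ** X')"
    unfolding kmeans_solution_def by metis
  show "X \<in> normalized_ind_mats \<and> (\<forall>X' :: real^'n^'k. X' \<in> normalized_ind_mats \<longrightarrow> hval A X' \<le> hval A X)"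
  proof (intro conjI allI impI XH)
    fix X' :: "real^'n^'k" assume X'H: "X' \<in> normalized_ind_mats"
    have "frob_sq A - hval A X \<le> frob_sq (A - D ** X)" by (rule frob_ge[OF XH])
    also have "\<dots> \<le> frob_sq (A - (A ** transpose X') ** X')" using D[of X' "A ** transpose X'"] X'H by simp
    also have "\<dots> = frob_sq A - hval A X'" by (rule frob_eq[OF X'H])
    finally show "hval A X' \<le> hval A X" by simp
  qed
next
  assume R: "X \<in> normalized_ind_mats \<and> (\<forall>X' :: real^'n^'k. X' \<in> normalized_ind_mats \<longrightarrow> hval A X' \<le> hval A X)"
  then have XH: "X \<in> normalized_ind_mats" by blast
  show "kmeans_solution A X"
    unfolding kmeans_solution_def
  proof (intro conjI XH exI[of _ "A ** transpose X"] allI impI)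
    fix D' :: "real^'k^'p" and X' :: "real^'n^'k" assume X'H: "X' \<in> normalized_ind_mats"
    have "frob_sq (A - (A ** transpose X) ** X) = frob_sq A - hval A X" by (rule frob_eq[OF XH])
    also have "\<dots> \<le> frob_sq A - hval A X'" using R X'H by simp
    also have "\<dots> \<le> frob_sq (A - D' ** X')" by (rule frob_ge[OF X'H])
    finally show "frob_sq (A - (A ** transpose X) ** X) \<le> frob_sq (A - D' ** X')" .
  qed
qed

theorem proposition2:
  fixes A :: "real^'n^'p"
  assumes "A *v ones = 0"
  shows "\<forall>X :: real^'n^'k. kmeans_solution A X \<longleftrightarrow> ratiocut_solution (L_of A) X"
proof
  fix X :: "real^'n^'k"
  show "kmeans_solution A X \<longleftrightarrow> ratiocut_solution (L_of A) X"
    unfolding kmeans_iff ratiocut_solution_def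
    using trace_id[OF assms] by (smt (verit))
qed

end
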